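(* Let $n\ge 2$ and let $\mathcal{A}=\langle Q,\Sigma,\delta\rangle$ be an $n$-state DFA whose transition monoid is $T_n$, with $x\in\Sigma$ a fixed letter of rank $n-1$. Then the digraph $\Gamma_{2n-3}$ is strongly connected.
   Context: Words act on states letter by letter from left to right. The transition monoid is the monoid of transformations of $Q$ generated by the letters; $T_n$ is the monoid of all self-maps of an $n$-element set. A letter has rank $n-1$ if $|Q\cdot x|=n-1$. For such $x$, $\mathrm{excl}(x)$ is the unique state in $Q\setminus Q\cdot x$, and $\mathrm{dupl}(x)$ is the unique state $p$ with $p=q_1\cdot x=q_2\cdot x$ for some $q_1\ne q_2$. Let $\Pi\subseteq\Sigma$ be the set of letters acting as permutations of $Q$, and $\Pi^i$ the set of words of length at most $i$ over $\Pi$ (including the empty word). $\Gamma_i$ is the digraph with vertex set $Q$ and edge set $E_i=\{(\mathrm{excl}(x)\cdot w,\ \mathrm{dupl}(x)\cdot w)\mid w\in\Pi^i\}$. A digraph is strongly connected if for every ordered pair of vertices there is a directed path from the first to the second. *)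

theory Defs
  imports Main "HOL-Library.FuncSet"
begin

definition is_dfa :: "'q set \<Rightarrow> 'a set \<Rightarrow> ('q \<Rightarrow> 'a \<Rightarrow> 'q) \<Rightarrow> bool" where
  "is_dfa Q Sig delta \<longleftrightarrow> finite Q \<and> Q \<noteq> {} \<and> finite Sig \<and>
     (\<forall>q\<in>Q. \<forall>a\<in>Sig. delta q a \<in> Q)"

definition word_act :: "('q \<Rightarrow> 'a \<Rightarrow> 'q) \<Rightarrow> 'q \<Rightarrow> 'a list \<Rightarrow> 'q" where
  "word_act delta q w = foldl delta q w"

definition transition_monoid :: "'q set \<Rightarrow> 'a set \<Rightarrow> ('q \<Rightarrow> 'a \<Rightarrow> 'q) \<Rightarrow> ('q \<Rightarrow> 'q) set" where
  "transition_monoid Q Sig delta =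
     {restrict (\<lambda>q. word_act delta q w) Q | w. set w \<subseteq> Sig}"

definition full_transf :: "'q set \<Rightarrow> ('q \<Rightarrow> 'q) set" where
  "full_transf Q = Q \<rightarrow>\<^sub>E Q"

definition letter_rank :: "'q set \<Rightarrow> ('q \<Rightarrow> 'a \<Rightarrow> 'q) \<Rightarrow> 'a \<Rightarrow> nat" where
  "letter_rank Q delta x = card ((\<lambda>q. delta q x) ` Q)"

definition excl :: "'q set \<Rightarrow> ('q \<Rightarrow> 'a \<Rightarrow> 'q) \<Rightarrow> 'a \<Rightarrow> 'q" where
  "excl Q delta x = (THE p. p \<in> Q - (\<lambda>q. delta q x) ` Q)"

definition dupl :: "'q set \<Rightarrow> ('q \<Rightarrow> 'a \<Rightarrow> 'q) \<Rightarrow> 'a \<Rightarrow> 'q" where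
  "dupl Q delta x = (THE p. \<exists>q1\<in>Q. \<exists>q2\<in>Q. q1 \<noteq> q2 \<and> p = delta q1 x \<and> p = delta q2 x)"

definition perm_letters :: "'q set \<Rightarrow> 'a set \<Rightarrow> ('q \<Rightarrow> 'a \<Rightarrow> 'q) \<Rightarrow> 'a set" where
  "perm_letters Q Sig delta = {a \<in> Sig. bij_betw (\<lambda>q. delta q a) Q Q}"

definition short_words :: "'a set \<Rightarrow> nat \<Rightarrow> 'a list set" where
  "short_words P i = {w. set w \<subseteq> P \<and> length w \<le> i}"

definition Gamma_edges :: "'q set \<Rightarrow> 'a set \<Rightarrow> ('q \<Rightarrow> 'a \<Rightarrow> 'q) \<Rightarrow> 'a \<Rightarrow> nat \<Rightarrow> ('q \<times> 'q) set" where
  "Gamma_edges Q Sig delta x i =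
     {(word_act delta (excl Q delta x) w, word_act delta (dupl Q delta x) w) | w.
        w \<in> short_words (perm_letters Q Sig delta) i}"

definition strongly_connected :: "'q set \<Rightarrow> ('q \<times> 'q) set \<Rightarrow> bool" where
  "strongly_connected V E \<longleftrightarrow> (\<forall>p\<in>V. \<forall>q\<in>V. (p, q) \<in> (E \<inter> (V \<times> V))\<^sup>*)"

end

theory Submission
  imports Defs
begin

lemma wa_Nil[simp]: "word_act d q [] = q" by (simp add: word_act_def)
lemma wa_Cons[simp]: "word_act d q (a#w) = word_act d (d q a) w" by (simp add: word_act_def)
lemma wa_snoc[simp]: "word_act d q (w@[a]) = d (word_act d q w) a" by (simp add: word_act_def)

lemma cyc:
  assumes fin: "finite Q" and ne: "q0 \<in> Q"
    and out: "\<forall>q\<in>Q. \<exists>v\<in>Q. v \<noteq> q \<and> (q, v) \<in> R"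
  shows "\<exists>u\<in>Q. \<exists>v\<in>Q. u \<noteq> v \<and> (u, v) \<in> R\<^sup>* \<and> (v, u) \<in> R\<^sup>*"
proof -
  obtain s where s: "\<forall>q\<in>Q. s q \<in> Q \<and> s q \<noteq> q \<and> (q, s q) \<in> R"
    using out by metis
  have itQ: "(s ^^ k) q0 \<in> Q" for k by (induction k) (use ne s in auto)
  have path: "x \<in> Q \<Longrightarrow> (x, (s ^^ m) x) \<in> R\<^sup>*" for m x
  proof (induction m)
    case 0 then show ?case by simp
  next
    case (Suc m)
    have "((s ^^ m) x) \<in> Q"
    proof -
      have "\<forall>y\<in>Q. (s ^^ k) y \<in> Q" for k by (induction k) (use s in auto)
      then show ?thesis using Suc.prems by blast
    qed
    then have "((s ^^ m) x, s ((s ^^ m) x)) \<in> R" using s by blast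
    then show ?case using Suc by (simp add: rtrancl.rtrancl_into_rtrancl)
  qed
  have "\<not> inj_on (\<lambda>k. (s ^^ k) q0) {..card Q}"
  proof
    assume "inj_on (\<lambda>k. (s ^^ k) q0) {..card Q}"
    moreover have "(\<lambda>k. (s ^^ k) q0) ` {..card Q} \<subseteq> Q" using itQ by blast
    ultimately have "card {..card Q} \<le> card Q" using card_inj_on_le fin by blast
    then show False by simp
  qed
  then obtain i j where ij: "i \<noteq> j" "(s ^^ i) q0 = (s ^^ j) q0" unfolding inj_on_def by blast
  have "\<exists>i j. i < j \<and> (s ^^ i) q0 = (s ^^ j) q0"
    using ij by (metis linorder_neqE_nat)
  then obtain i j where ij: "i < j" "(s ^^ i) q0 = (s ^^ j) q0" by blast
  define u where "u = (s ^^ i) q0"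
  have uQ: "u \<in> Q" using itQ u_def by simp
  have uv: "(u, s u) \<in> R" "s u \<in> Q" "s u \<noteq> u" using s uQ by auto
  have "(s ^^ (j - i - 1)) (s u) = (s ^^ (j - i - 1 + Suc i)) q0"
    unfolding u_def by (simp add: funpow_add funpow_swap1)
  also have "j - i - 1 + Suc i = j" using ij by simp
  finally have "(s ^^ (j - i - 1)) (s u) = u" using ij u_def by simp
  then have "(s u, u) \<in> R\<^sup>*" using path[of "s u" "j - i - 1"] uv by simp
  then show ?thesis using uv uQ by blast
qed

lemma cls_le:
  assumes fin: "finite Q" and sub: "S \<subseteq> S'" and S'Q: "S' \<subseteq> Q \<times> Q"
    and refl: "\<And>q. q \<in> Q \<Longrightarrow> (q, q) \<in> S" and symS': "sym S'" and trS': "trans S'"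
  shows "card ((\<lambda>q. S' `` {q}) ` Q) \<le> card ((\<lambda>q. S `` {q}) ` Q)"
    and "(u, v) \<in> S' \<Longrightarrow> (u, v) \<notin> S \<Longrightarrow>
         card ((\<lambda>q. S' `` {q}) ` Q) < card ((\<lambda>q. S `` {q}) ` Q)"
proof -
  define \<Phi> where "\<Phi> C = (\<Union>c\<in>C. S' `` {c})" for C
  have key: "\<Phi> (S `` {q}) = S' `` {q}" if q: "q \<in> Q" for q
  proof
    show "\<Phi> (S `` {q}) \<subseteq> S' `` {q}"
      unfolding \<Phi>_def using sub trS' by (auto dest: transD)
    show "S' `` {q} \<subseteq> \<Phi> (S `` {q})"
      unfolding \<Phi>_def using refl[OF q] by auto
  qed
  have img: "(\<lambda>q. S' `` {q}) ` Q = \<Phi> ` ((\<lambda>q. S `` {q}) ` Q)"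
    using key by (simp add: image_image)
  have finX: "finite ((\<lambda>q. S `` {q}) ` Q)" using fin by simp
  show "card ((\<lambda>q. S' `` {q}) ` Q) \<le> card ((\<lambda>q. S `` {q}) ` Q)"
    unfolding img by (rule card_image_le[OF finX])
  assume uv: "(u, v) \<in> S'" and nuv: "(u, v) \<notin> S"
  have uQ: "u \<in> Q" and vQ: "v \<in> Q" using uv S'Q by auto
  have ne: "S `` {u} \<noteq> S `` {v}" using refl[OF vQ] nuv by auto
  have eq: "S' `` {u} = S' `` {v}"
  proof -
    have "(v, u) \<in> S'" using uv symS' by (auto dest: symD)
    then show ?thesis using uv trS' by (auto dest: transD)
  qed
  have "\<not> inj_on \<Phi> ((\<lambda>q. S `` {q}) ` Q)"
  proof
    assume "inj_on \<Phi> ((\<lambda>q. S `` {q}) ` Q)"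
    moreover have "\<Phi> (S `` {u}) = \<Phi> (S `` {v})" using key uQ vQ eq by simp
    ultimately show False using ne uQ vQ unfolding inj_on_def by blast
  qed
  then have "card (\<Phi> ` ((\<lambda>q. S `` {q}) ` Q)) \<noteq> card ((\<lambda>q. S `` {q}) ` Q)"
    using inj_on_iff_eq_card[OF finX] by blast
  moreover have "card (\<Phi> ` ((\<lambda>q. S `` {q}) ` Q)) \<le> card ((\<lambda>q. S `` {q}) ` Q)"
    by (rule card_image_le[OF finX])
  ultimately show "card ((\<lambda>q. S' `` {q}) ` Q) < card ((\<lambda>q. S `` {q}) ` Q)"
    unfolding img by linarith
qed

locale L =
  fixes Q :: "'q set" and Sig :: "'a set" and delta :: "'q \<Rightarrow> 'a \<Rightarrow> 'q"
    and n :: nat and x :: 'a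
  assumes dfa: "is_dfa Q Sig delta"
    and cardQ: "card Q = n" and n2: "n \<ge> 2"
    and mon: "transition_monoid Q Sig delta = full_transf Q"
    and xS: "x \<in> Sig" and rk: "letter_rank Q delta x = n - 1"
begin

abbreviation "P \<equiv> perm_letters Q Sig delta"

lemma finQ: "finite Q" using dfa by (simp add: is_dfa_def)
lemma delQ: "q \<in> Q \<Longrightarrow> a \<in> Sig \<Longrightarrow> delta q a \<in> Q" using dfa by (simp add: is_dfa_def)
lemma PS: "P \<subseteq> Sig" by (auto simp: perm_letters_def)
lemma Pbij: "a \<in> P \<Longrightarrow> bij_betw (\<lambda>q. delta q a) Q Q" by (auto simp: perm_letters_def)

lemma waQ: "q \<in> Q \<Longrightarrow> set w \<subseteq> Sig \<Longrightarrow> word_act delta q w \<in> Q"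
  by (induction w arbitrary: q) (auto intro: delQ)

lemma waPQ: "q \<in> Q \<Longrightarrow> set w \<subseteq> P \<Longrightarrow> word_act delta q w \<in> Q"
  using waQ PS by blast

lemma wa_inj: "set w \<subseteq> P \<Longrightarrow> inj_on (\<lambda>q. word_act delta q w) Q"
proof (induction w)
  case Nil then show ?case by simp
next
  case (Cons a w)
  have b: "bij_betw (\<lambda>q. delta q a) Q Q" using Cons.prems Pbij by auto
  have i: "inj_on (\<lambda>q. word_act delta q w) Q" using Cons by auto
  show ?case unfolding wa_Cons
    by (rule comp_inj_on[of "\<lambda>q. delta q a" Q "\<lambda>q. word_act delta q w", unfolded comp_def])
       (use b i in \<open>auto simp: bij_betw_def\<close>)
qed

lemma inj_letters: "set w \<subseteq> Sig \<Longrightarrow> inj_on (\<lambda>q. word_act delta q w) Q \<Longrightarrow> set w \<subseteq> P"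
proof (induction w)
  case Nil then show ?case by simp
next
  case (Cons a w)
  have aS: "a \<in> Sig" using Cons.prems by auto
  have sub: "(\<lambda>q. delta q a) ` Q \<subseteq> Q" using aS delQ by auto
  have ia: "inj_on (\<lambda>q. delta q a) Q"
    using Cons.prems(2) unfolding wa_Cons inj_on_def by metis
  have im: "(\<lambda>q. delta q a) ` Q = Q" using endo_inj_surj[OF finQ sub ia] .
  have "inj_on (\<lambda>q. word_act delta q w) Q"
  proof (rule inj_onI)
    fix u v assume u: "u \<in> Q" and v: "v \<in> Q" and eq: "word_act delta u w = word_act delta v w"
    obtain u' where u': "u' \<in> Q" "u = delta u' a" using u im by force
    obtain v' where v': "v' \<in> Q" "v = delta v' a" using v im by force
    have "u' = v'" using Cons.prems(2) u' v' eq unfolding inj_on_def by simp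
    then show "u = v" using u' v' by simp
  qed
  then have "set w \<subseteq> P" using Cons by auto
  moreover have "a \<in> P" using aS ia im by (auto simp: perm_letters_def bij_betw_def)
  ultimately show ?case by simp
qed


abbreviation "ex \<equiv> excl Q delta x"
abbreviation "du \<equiv> dupl Q delta x"

lemma img_card: "card ((\<lambda>q. delta q x) ` Q) = n - 1" using rk by (simp add: letter_rank_def)
lemma imgQ: "(\<lambda>q. delta q x) ` Q \<subseteq> Q" using delQ xS by auto

lemma ex_prop: "ex \<in> Q \<and> ex \<notin> (\<lambda>q. delta q x) ` Q"
proof -
  let ?I = "(\<lambda>q. delta q x) ` Q"
  have "card (Q - ?I) = 1" using card_Diff_subset[OF finite_subset[OF imgQ finQ] imgQ] img_card cardQ n2 by simp
  then obtain p where p: "Q - ?I = {p}" using card_1_singletonE by blast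
  have "(THE p. p \<in> Q - ?I) = p" using p by auto
  then show ?thesis using p unfolding excl_def by auto
qed

lemma du_prop: "du \<in> (\<lambda>q. delta q x) ` Q"
proof -
  let ?f = "\<lambda>q. delta q x"
  let ?I = "?f ` Q"
  have "\<not> inj_on ?f Q" using card_image[of ?f Q] img_card cardQ n2 by auto
  then obtain q1 q2 where q: "q1 \<in> Q" "q2 \<in> Q" "q1 \<noteq> q2" "?f q1 = ?f q2" unfolding inj_on_def by blast
  have uniq: "p' = ?f q1" if H: "\<exists>r1\<in>Q. \<exists>r2\<in>Q. r1 \<noteq> r2 \<and> p' = ?f r1 \<and> p' = ?f r2" for p'
  proof (rule ccontr)
    assume ne: "p' \<noteq> ?f q1"
    obtain r1 r2 where r: "r1 \<in> Q" "r2 \<in> Q" "r1 \<noteq> r2" "p' = ?f r1" "p' = ?f r2" using H by blast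
    have d: "q2 \<noteq> r2" using ne q r by auto
    have "?I = ?f ` (Q - {q2, r2})"
    proof
      show "?f ` (Q - {q2, r2}) \<subseteq> ?I" by auto
      show "?I \<subseteq> ?f ` (Q - {q2, r2})"
      proof
        fix y assume "y \<in> ?I"
        then obtain z where z: "z \<in> Q" "y = ?f z" by auto
        show "y \<in> ?f ` (Q - {q2, r2})"
        proof (cases "z = q2")
          case True
          have "q1 \<noteq> r2" using ne q r by auto
          then show ?thesis using True z q by (auto intro!: image_eqI[of _ _ q1])
        next
          case False
          show ?thesis
          proof (cases "z = r2")
            case True
            have "r1 \<noteq> q2" using ne q r by auto
            then show ?thesis using True z r by (auto intro!: image_eqI[of _ _ r1])
          qed (use False z in auto)
        qed
      qed
    qed
    then have "card ?I \<le> card (Q - {q2, r2})" using card_image_le finQ by (metis finite_Diff)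
    also have "\<dots> = n - 2" using q r d cardQ finQ by (simp add: card_Diff_subset)
    finally show False using img_card n2 by simp
  qed
  have "(THE p. \<exists>q1\<in>Q. \<exists>q2\<in>Q. q1 \<noteq> q2 \<and> p = ?f q1 \<and> p = ?f q2) = ?f q1"
    apply (rule the_equality)
    using q apply blast
    using uniq by blast
  then show ?thesis unfolding dupl_def using q by auto
qed

lemma exQ: "ex \<in> Q" using ex_prop by blast
lemma duQ: "du \<in> Q" using du_prop imgQ by blast
lemma exdu: "ex \<noteq> du" using ex_prop du_prop by metis


definition tr :: "'q \<Rightarrow> 'q \<Rightarrow> 'q \<Rightarrow> 'q" where
  "tr a b y = (if y = a then b else if y = b then a else y)"

lemma tr_Q: "a \<in> Q \<Longrightarrow> b \<in> Q \<Longrightarrow> y \<in> Q \<Longrightarrow> tr a b y \<in> Q" by (simp add: tr_def)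
lemma tr_inj: "inj (tr a b)" unfolding inj_def tr_def by auto

lemma reach:
  assumes "a \<in> Q" "b \<in> Q" "a \<noteq> b" "p \<in> Q" "q \<in> Q" "p \<noteq> q"
  shows "\<exists>w. set w \<subseteq> P \<and> word_act delta a w = p \<and> word_act delta b w = q"
proof -
  define b' where "b' = tr a p b"
  define g where "g = tr b' q \<circ> tr a p"
  have b'Q: "b' \<in> Q" using assms by (simp add: b'_def tr_Q)
  have ga: "g a = p"
  proof -
    have "b' \<noteq> p" using assms unfolding b'_def tr_def by auto
    then show ?thesis using assms unfolding g_def tr_def by auto
  qed
  have gb: "g b = q" unfolding g_def b'_def by (simp add: tr_def)
  have gi: "inj_on g Q" unfolding g_def using tr_inj by (metis inj_compose inj_on_subset subset_UNIV)
  have gQ: "\<And>y. y \<in> Q \<Longrightarrow> g y \<in> Q" unfolding g_def using assms b'Q by (simp add: tr_Q)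
  have "restrict g Q \<in> full_transf Q" using gQ by (auto simp: full_transf_def)
  then obtain w where w: "restrict g Q = restrict (\<lambda>y. word_act delta y w) Q" "set w \<subseteq> Sig"
    unfolding mon[symmetric] transition_monoid_def by blast
  have eq: "\<And>y. y \<in> Q \<Longrightarrow> word_act delta y w = g y" using w(1) by (metis restrict_apply')
  have "inj_on (\<lambda>y. word_act delta y w) Q" using gi eq inj_on_cong by (metis (mono_tags, lifting))
  then have "set w \<subseteq> P" using inj_letters w(2) by blast
  then show ?thesis using eq assms ga gb by auto
qed

lemma closure_pairs:
  assumes R: "\<And>u v c. (u, v) \<in> R \<Longrightarrow> u \<in> Q \<Longrightarrow> v \<in> Q \<Longrightarrow> c \<in> P \<Longrightarrow> (delta u c, delta v c) \<in> R"
    and ab: "a \<in> Q" "b \<in> Q" "a \<noteq> b" "(a, b) \<in> R"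
    and pq: "p \<in> Q" "q \<in> Q" "p \<noteq> q"
  shows "(p, q) \<in> R"
proof -
  obtain w where w: "set w \<subseteq> P" "word_act delta a w = p" "word_act delta b w = q"
    using reach ab pq by blast
  have "\<forall>u v. u \<in> Q \<longrightarrow> v \<in> Q \<longrightarrow> (u, v) \<in> R \<longrightarrow> (word_act delta u w, word_act delta v w) \<in> R"
    using w(1)
  proof (induction w)
    case Nil then show ?case by simp
  next
    case (Cons c w)
    then show ?case using R PS delQ by (simp add: subset_iff)
  qed
  then show ?thesis using ab w by auto
qed

lemma closure_set:
  assumes A: "\<And>u c. u \<in> A \<Longrightarrow> u \<in> Q \<Longrightarrow> c \<in> P \<Longrightarrow> delta u c \<in> A"
    and a: "a \<in> Q" "a \<in> A"
  shows "Q \<subseteq> A"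
proof
  fix p assume p: "p \<in> Q"
  obtain b where b: "b \<in> Q" "b \<noteq> a"
  proof -
    have "card (Q - {a}) = n - 1" using cardQ a finQ by simp
    then have "Q - {a} \<noteq> {}" using n2 by (intro notI) simp
    then show ?thesis using that by blast
  qed
  obtain q where q: "q \<in> Q" "q \<noteq> p"
  proof -
    have "card (Q - {p}) = n - 1" using cardQ p finQ by simp
    then have "Q - {p} \<noteq> {}" using n2 by (intro notI) simp
    then show ?thesis using that by blast
  qed
  obtain w where w: "set w \<subseteq> P" "word_act delta a w = p"
    using reach[of a b p q] a b p q by metis
  have "\<forall>u. u \<in> Q \<longrightarrow> u \<in> A \<longrightarrow> word_act delta u w \<in> A"
    using w(1)
  proof (induction w)
    case Nil then show ?case by simp
  next
    case (Cons c w)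
    then show ?case using A PS delQ by (simp add: subset_iff)
  qed
  then show "p \<in> A" using a w by auto
qed


abbreviation "E i \<equiv> Gamma_edges Q Sig delta x i"

lemma E_mem: "(u, v) \<in> E i \<longleftrightarrow> (\<exists>w. set w \<subseteq> P \<and> length w \<le> i \<and> u = word_act delta ex w \<and> v = word_act delta du w)"
  unfolding Gamma_edges_def short_words_def by auto

lemma E_Q: "(u, v) \<in> E i \<Longrightarrow> u \<in> Q \<and> v \<in> Q"
proof -
  assume "(u, v) \<in> E i"
  then obtain w where w: "set w \<subseteq> P" "u = word_act delta ex w" "v = word_act delta du w"
    using E_mem by blast
  then show ?thesis using waPQ[OF exQ w(1)] waPQ[OF duQ w(1)] by simp
qed

lemma E_ne: "(u, v) \<in> E i \<Longrightarrow> u \<noteq> v"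
proof -
  assume "(u, v) \<in> E i"
  then obtain w where w: "set w \<subseteq> P" "u = word_act delta ex w" "v = word_act delta du w"
    using E_mem by blast
  then show ?thesis using inj_on_contraD[OF wa_inj[OF w(1)] exdu exQ duQ] by simp
qed

lemma E_mono: assumes "i \<le> k" shows "E i \<subseteq> E k"
proof
  fix p assume "p \<in> E i"
  then obtain w where "set w \<subseteq> P" "length w \<le> i" "fst p = word_act delta ex w" "snd p = word_act delta du w"
    using E_mem[of "fst p" "snd p"] by auto
  then have "(fst p, snd p) \<in> E k" using assms unfolding E_mem by (intro exI[of _ w]) auto
  then show "p \<in> E k" by simp
qed

lemma E_step: "(u, v) \<in> E i \<Longrightarrow> c \<in> P \<Longrightarrow> (delta u c, delta v c) \<in> E (Suc i)"
proof -
  assume "(u, v) \<in> E i" "c \<in> P"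
  then obtain w where w: "set w \<subseteq> P" "length w \<le> i" "u = word_act delta ex w" "v = word_act delta du w"
    using E_mem by blast
  then show ?thesis using \<open>c \<in> P\<close> unfolding E_mem by (intro exI[of _ "w @ [c]"]) auto
qed

lemma E0: "(ex, du) \<in> E 0" unfolding E_mem by (intro exI[of _ "[]"]) auto

lemma fstQ: "fst ` E i \<subseteq> Q"
proof
  fix y assume "y \<in> fst ` E i"
  then obtain p where p: "p \<in> E i" "y = fst p" by blast
  then have "(fst p, snd p) \<in> E i" by simp
  then show "y \<in> Q" using E_Q p(2) by blast
qed

lemma fst_mem: "(u, v) \<in> E i \<Longrightarrow> u \<in> fst ` E i"
  by (metis fst_conv image_eqI)

lemma phaseA: "fst ` E i = Q \<or> Suc i \<le> card (fst ` E i)"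
proof (induction i)
  case 0
  have "ex \<in> fst ` E 0" using E0 fst_mem by blast
  moreover have "finite (fst ` E 0)" using fstQ finQ finite_subset by blast
  ultimately have "card (fst ` E 0) \<noteq> 0" by auto
  then show ?case by linarith
next
  case (Suc i)
  have sub: "fst ` E i \<subseteq> fst ` E (Suc i)" using E_mono[of i "Suc i"] by (intro image_mono) simp
  have subQ: "fst ` E (Suc i) \<subseteq> Q" using fstQ .
  have fin: "finite (fst ` E (Suc i))" using subQ finQ finite_subset by blast
  show ?case
  proof (cases "fst ` E i = fst ` E (Suc i)")
    case True
    have "Q \<subseteq> fst ` E i"
    proof (rule closure_set[of _ ex])
      fix u c assume u: "u \<in> fst ` E i" and c: "c \<in> P"
      then obtain p where p: "p \<in> E i" "u = fst p" by blast
      then have "(u, snd p) \<in> E i" by simp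
      then have "(delta u c, delta (snd p) c) \<in> E (Suc i)" using E_step c by blast
      then have "delta u c \<in> fst ` E (Suc i)" by (rule fst_mem)
      then show "delta u c \<in> fst ` E i" using True by simp
    next
      show "ex \<in> Q" using exQ .
      have "(ex, du) \<in> E i" using E0 E_mono[of 0 i] by blast
      then show "ex \<in> fst ` E i" by (rule fst_mem)
    qed
    then show ?thesis using True subQ by simp
  next
    case False
    then have ps: "fst ` E i \<subset> fst ` E (Suc i)" using sub by blast
    have lt: "card (fst ` E i) < card (fst ` E (Suc i))" by (rule psubset_card_mono[OF fin ps])
    have "fst ` E i \<noteq> Q" using ps subQ by blast
    then have "Suc i \<le> card (fst ` E i)" using Suc.IH by blast
    then show ?thesis using lt by linarith
  qed
qed

lemma allout: "q \<in> Q \<Longrightarrow> \<exists>v \<in> Q. v \<noteq> q \<and> (q, v) \<in> E (n - 1)"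
proof -
  assume q: "q \<in> Q"
  have "fst ` E (n - 1) = Q"
  proof -
    have subQ: "fst ` E (n - 1) \<subseteq> Q" using fstQ .
    have sn: "Suc (n - 1) = n" using n2 by linarith
    have "fst ` E (n - 1) = Q \<or> Suc (n - 1) \<le> card (fst ` E (n - 1))" by (rule phaseA)
    then have A: "fst ` E (n - 1) = Q \<or> n \<le> card (fst ` E (n - 1))" unfolding sn .
    have B: "card (fst ` E (n - 1)) \<le> card Q" using card_mono[OF finQ subQ] .
    from A B have "fst ` E (n - 1) = Q \<or> card (fst ` E (n - 1)) = card Q" unfolding cardQ by linarith
    then show ?thesis using card_subset_eq[OF finQ subQ] by blast
  qed
  then have "q \<in> fst ` E (n - 1)" using q by simp
  then obtain p where p: "p \<in> E (n - 1)" "q = fst p" by blast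
  then have v: "(q, snd p) \<in> E (n - 1)" by simp
  have "snd p \<in> Q" using E_Q[OF v] by blast
  moreover have "snd p \<noteq> q" using E_ne[OF v] by blast
  ultimately show ?thesis using v by blast
qed


definition SS :: "nat \<Rightarrow> ('q \<times> 'q) set" where
  "SS i = {(u, v). u \<in> Q \<and> v \<in> Q \<and> (u, v) \<in> (E i)\<^sup>* \<and> (v, u) \<in> (E i)\<^sup>*}"

abbreviation "cls i \<equiv> card ((\<lambda>q. SS i `` {q}) ` Q)"

lemma SS_Q: "SS i \<subseteq> Q \<times> Q" unfolding SS_def by auto
lemma SS_refl: "q \<in> Q \<Longrightarrow> (q, q) \<in> SS i" unfolding SS_def by auto
lemma SS_sym: "sym (SS i)" unfolding SS_def sym_def by auto
lemma SS_trans: "trans (SS i)" unfolding SS_def trans_def by (auto intro: rtrancl_trans)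
lemma SS_mono: "SS i \<subseteq> SS (Suc i)"
proof -
  have "(E i)\<^sup>* \<subseteq> (E (Suc i))\<^sup>*" using E_mono[of i "Suc i"] by (intro rtrancl_mono) simp
  then show ?thesis unfolding SS_def by auto
qed

lemma path_step: "(u, v) \<in> (E i)\<^sup>* \<Longrightarrow> c \<in> P \<Longrightarrow> (delta u c, delta v c) \<in> (E (Suc i))\<^sup>*"
proof (induction rule: rtrancl_induct)
  case base then show ?case by simp
next
  case (step y z)
  then have "(delta y c, delta z c) \<in> E (Suc i)" using E_step by blast
  then show ?case using step by (meson rtrancl.rtrancl_into_rtrancl)
qed

lemma SS_step: "(u, v) \<in> SS i \<Longrightarrow> c \<in> P \<Longrightarrow> (delta u c, delta v c) \<in> SS (Suc i)"
  unfolding SS_def using path_step delQ PS by blast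

lemma SC_of: "(\<And>p q. p \<in> Q \<Longrightarrow> q \<in> Q \<Longrightarrow> p \<noteq> q \<Longrightarrow> (p, q) \<in> SS i) \<Longrightarrow> strongly_connected Q (E i)"
proof -
  assume H: "\<And>p q. p \<in> Q \<Longrightarrow> q \<in> Q \<Longrightarrow> p \<noteq> q \<Longrightarrow> (p, q) \<in> SS i"
  have EQ: "E i \<inter> Q \<times> Q = E i" using E_Q by auto
  show ?thesis unfolding strongly_connected_def EQ
  proof (intro ballI)
    fix p q assume "p \<in> Q" "q \<in> Q"
    then show "(p, q) \<in> (E i)\<^sup>*" using H[of p q] unfolding SS_def by (cases "p = q") auto
  qed
qed

lemma SC_mono: "strongly_connected Q (E i) \<Longrightarrow> i \<le> k \<Longrightarrow> strongly_connected Q (E k)"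
proof -
  assume sc: "strongly_connected Q (E i)" and ik: "i \<le> k"
  have EQ: "\<And>j. E j \<inter> Q \<times> Q = E j" using E_Q by auto
  have "(E i)\<^sup>* \<subseteq> (E k)\<^sup>*" using E_mono[OF ik] by (rule rtrancl_mono)
  then show ?thesis using sc unfolding strongly_connected_def EQ by blast
qed

lemma stable_SC:
  assumes st: "SS (Suc i) \<subseteq> SS i" and uv: "u \<in> Q" "v \<in> Q" "u \<noteq> v" "(u, v) \<in> SS i"
  shows "strongly_connected Q (E i)"
proof (rule SC_of)
  fix p q assume "p \<in> Q" "q \<in> Q" "p \<noteq> q"
  then show "(p, q) \<in> SS i"
    using closure_pairs[of "SS i" u v p q] SS_step st uv by blast
qed

lemma base_pair: "\<exists>u\<in>Q. \<exists>v\<in>Q. u \<noteq> v \<and> (u, v) \<in> SS (n - 1)"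
proof -
  have "\<exists>u\<in>Q. \<exists>v\<in>Q. u \<noteq> v \<and> (u, v) \<in> (E (n - 1))\<^sup>* \<and> (v, u) \<in> (E (n - 1))\<^sup>*"
    using cyc[OF finQ exQ] allout by blast
  then show ?thesis unfolding SS_def by blast
qed

lemma pair_later: "n - 1 \<le> i \<Longrightarrow> \<exists>u\<in>Q. \<exists>v\<in>Q. u \<noteq> v \<and> (u, v) \<in> SS i"
proof (induction i)
  case 0 then show ?case using base_pair by simp
next
  case (Suc i)
  show ?case
  proof (cases "n - 1 \<le> i")
    case True then show ?thesis using Suc.IH SS_mono by blast
  next
    case False then have "Suc i = n - 1" using Suc.prems by simp
    then show ?thesis using base_pair by simp
  qed
qed

lemma base_cls: "cls (n - 1) \<le> n - 1"
proof -
  obtain u v where uv: "u \<in> Q" "v \<in> Q" "u \<noteq> v" "(u, v) \<in> SS (n - 1)" using base_pair by blast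
  let ?K = "\<lambda>q. SS (n - 1) `` {q}"
  have "?K u = ?K v"
  proof -
    have "(v, u) \<in> SS (n - 1)" using uv SS_sym by (auto dest: symD)
    then show ?thesis using uv SS_trans by (auto dest: transD)
  qed
  then have "?K ` Q = ?K ` (Q - {v})" using uv by (auto simp: image_iff)
  then have "cls (n - 1) \<le> card (Q - {v})" using card_image_le finQ by (metis finite_Diff)
  also have "\<dots> = n - 1" using uv cardQ finQ by simp
  finally show ?thesis .
qed

lemma phaseB: "j \<le> n - 2 \<Longrightarrow> strongly_connected Q (E (n - 1 + j)) \<or> cls (n - 1 + j) + j \<le> n - 1"
proof (induction j)
  case 0 then show ?case using base_cls by simp
next
  case (Suc j)
  let ?i = "n - 1 + j"
  have si: "n - 1 + Suc j = Suc ?i" by simp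
  show ?case
  proof (cases "strongly_connected Q (E ?i)")
    case True
    then show ?thesis unfolding si using SC_mono[of ?i "Suc ?i"] by simp
  next
    case False
    then have c: "cls ?i + j \<le> n - 1" using Suc by simp
    obtain u v where uv: "u \<in> Q" "v \<in> Q" "u \<noteq> v" "(u, v) \<in> SS ?i" using pair_later[of ?i] by auto
    show ?thesis
    proof (cases "SS (Suc ?i) \<subseteq> SS ?i")
      case True
      then have False using stable_SC uv False by blast
      then show ?thesis ..
    next
      case nsub: False
      then obtain a b where ab: "(a, b) \<in> SS (Suc ?i)" "(a, b) \<notin> SS ?i" by auto
      have "cls (Suc ?i) < cls ?i"
        by (rule cls_le(2)[OF finQ SS_mono SS_Q SS_refl SS_sym SS_trans ab])
      then show ?thesis unfolding si using c by (intro disjI2) linarith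
    qed
  qed
qed

lemma main: "strongly_connected Q (E (2 * n - 3))"
proof -
  have eq: "n - 1 + (n - 2) = 2 * n - 3" using n2 by simp
  have "strongly_connected Q (E (2 * n - 3)) \<or> cls (2 * n - 3) + (n - 2) \<le> n - 1"
    using phaseB[of "n - 2"] unfolding eq by simp
  moreover have "strongly_connected Q (E (2 * n - 3))" if c: "cls (2 * n - 3) \<le> 1"
  proof (rule SC_of)
    fix p q assume pq: "p \<in> Q" "q \<in> Q" "p \<noteq> q"
    let ?K = "\<lambda>q. SS (2 * n - 3) `` {q}"
    have "finite (?K ` Q)" using finQ by simp
    then have all: "\<forall>a\<in>?K ` Q. \<forall>b\<in>?K ` Q. a = b"
      using c card_le_Suc0_iff_eq[of "?K ` Q"] by (metis One_nat_def)
    have "?K p \<in> ?K ` Q" "?K q \<in> ?K ` Q" using pq(1,2) by blast+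
    then have "?K p = ?K q" using all by blast
    moreover have "q \<in> ?K q" using SS_refl pq by simp
    ultimately show "(p, q) \<in> SS (2 * n - 3)" by (metis Image_singleton_iff)
  qed
  ultimately show ?thesis using n2 by linarith
qed

end

theorem lemma2:
  fixes Q :: "'q set" and Sig :: "'a set" and delta :: "'q \<Rightarrow> 'a \<Rightarrow> 'q"
    and n :: nat and x :: 'a
  assumes "is_dfa Q Sig delta"
    and "card Q = n" and "n \<ge> 2"
    and "transition_monoid Q Sig delta = full_transf Q"
    and "x \<in> Sig" and "letter_rank Q delta x = n - 1"
  shows "strongly_connected Q (Gamma_edges Q Sig delta x (2 * n - 3))"
proof -
  interpret L Q Sig delta n x using assms by unfold_locales
  show ?thesis by (rule main)
qed

end
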